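(* On $\ell^2$ (real square-summable sequences, with canonical Hilbert basis $e_1,e_2,\dots$) define for $n=0,1,2,\dots$ the operator $A_n$ with domain $D(A_n)=\{(x_j)_{j\ge1}\in\ell^2:\sum_j j^2|x_j|^2<\infty\}$ by $A_ne_j=je_j$ for $j\neq n$ and $A_ne_n=-ne_n$ (so $A_0e_j=je_j$ for all $j$). Then each $A_n\in\mathcal S$, $\gamma(A_n,A_0)\to0$, but $\rho(A_n,A_0)\not\to 0$; more precisely, for any $\alpha\in\mathcal A$ with $\alpha(\lambda)=1$ for $\lambda$ sufficiently large and $\alpha(\lambda)=0$ for $\lambda$ sufficiently negative, $\|\alpha(A_n)-\alpha(A_0)\|=1$ for all sufficiently large $n$. In particular the identity map $(\mathcal S,\gamma)\to(\mathcal S,\rho)$ is not continuous.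
   Context: $\mathcal S$ denotes the set of densely defined selfadjoint operators on a separable real Hilbert space (operators extended complex-linearly to the complexification when needed). Riesz map $\Psi(A)=A(1+A^2)^{-1/2}$, Riesz metric $\rho(A_0,A_1)=\|\Psi(A_0)-\Psi(A_1)\|$, gap metric $\gamma(A_0,A_1)=\|(\mathbf i+A_0)^{-1}-(\mathbf i+A_1)^{-1}\|+\|(\mathbf i-A_0)^{-1}-(\mathbf i-A_1)^{-1}\|$. $\mathcal A$ is the $C^*$-algebra of continuous $f:\mathbb R\to\mathbb C$ for which both limits at $\pm\infty$ exist; $f(A)$ is defined by functional calculus. *)

theory Defs
  imports Complex_Main
begin

type_synonym rseq = "nat \<Rightarrow> real"
type_synonym cseq = "nat \<Rightarrow> complex"

text \<open>Index j :: nat corresponds to the paper's basis vector e_(j+1).\<close>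

definition rell2 :: "rseq set" where
  "rell2 = {x. summable (\<lambda>j. (x j)^2)}"

definition rinner :: "rseq \<Rightarrow> rseq \<Rightarrow> real" where
  "rinner x y = (\<Sum>j. x j * y j)"

definition rnorm :: "rseq \<Rightarrow> real" where
  "rnorm x = sqrt (\<Sum>j. (x j)^2)"

definition cell2 :: "cseq set" where
  "cell2 = {z. summable (\<lambda>j. (cmod (z j))^2)}"

definition cinner :: "cseq \<Rightarrow> cseq \<Rightarrow> complex" where
  "cinner x y = (\<Sum>j. x j * cnj (y j))"

definition cnorm :: "cseq \<Rightarrow> real" where
  "cnorm z = sqrt (\<Sum>j. (cmod (z j))^2)"

type_synonym rop = "rseq set \<times> (rseq \<Rightarrow> rseq)"

definition selfadjoint :: "rop \<Rightarrow> bool" where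
  "selfadjoint A \<longleftrightarrow>
     (let D = fst A; T = snd A in
       D \<subseteq> rell2 \<and> (\<forall>x\<in>D. T x \<in> rell2) \<and>
       (\<forall>x\<in>D. \<forall>y\<in>D. \<forall>a b::real. (\<lambda>j. a * x j + b * y j) \<in> D \<and>
            T (\<lambda>j. a * x j + b * y j) = (\<lambda>j. a * T x j + b * T y j)) \<and>
       (\<forall>x\<in>rell2. \<forall>\<epsilon>>0. \<exists>y\<in>D. rnorm (\<lambda>j. x j - y j) < \<epsilon>) \<and>
       (\<forall>x\<in>D. \<forall>y\<in>D. rinner (T x) y = rinner x (T y)) \<and>
       {y\<in>rell2. \<exists>z\<in>rell2. \<forall>x\<in>D. rinner (T x) y = rinner x z} = D)"

definition SA :: "rop set" where
  "SA = {A. selfadjoint A}"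

definition cdom :: "rop \<Rightarrow> cseq set" where
  "cdom A = {z. (\<lambda>j. Re (z j)) \<in> fst A \<and> (\<lambda>j. Im (z j)) \<in> fst A}"

definition cact :: "rop \<Rightarrow> cseq \<Rightarrow> cseq" where
  "cact A z = (\<lambda>j. complex_of_real (snd A (\<lambda>k. Re (z k)) j)
                  + \<i> * complex_of_real (snd A (\<lambda>k. Im (z k)) j))"

definition resolv :: "complex \<Rightarrow> complex \<Rightarrow> rop \<Rightarrow> cseq \<Rightarrow> cseq" where
  "resolv c s A y = (THE x. x \<in> cdom A \<and> (\<lambda>j. c * x j + s * cact A x j) = y)"

definition bounded_cop :: "(cseq \<Rightarrow> cseq) \<Rightarrow> bool" where
  "bounded_cop B \<longleftrightarrow> (\<forall>x\<in>cell2. B x \<in> cell2) \<and>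
     (\<forall>x\<in>cell2. \<forall>y\<in>cell2. \<forall>a b::complex.
        B (\<lambda>j. a * x j + b * y j) = (\<lambda>j. a * B x j + b * B y j)) \<and>
     (\<exists>K. \<forall>x\<in>cell2. cnorm (B x) \<le> K * cnorm x)"

definition copnorm :: "(cseq \<Rightarrow> cseq) \<Rightarrow> real" where
  "copnorm B = (SUP x\<in>{x\<in>cell2. cnorm x \<le> 1}. cnorm (B x))"

definition calg :: "(real \<Rightarrow> complex) set" where
  "calg = {f. continuous_on UNIV f \<and> (\<exists>l. (f \<longlongrightarrow> l) at_top) \<and> (\<exists>l. (f \<longlongrightarrow> l) at_bot)}"

definition supnorm :: "(real \<Rightarrow> complex) \<Rightarrow> real" where
  "supnorm f = (SUP t. cmod (f t))"

text \<open>Such a Phi exists and is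
  unique for A in S; f(A) is its value at f.\<close>
definition is_fc :: "rop \<Rightarrow> ((real \<Rightarrow> complex) \<Rightarrow> cseq \<Rightarrow> cseq) \<Rightarrow> bool" where
  "is_fc A \<Phi> \<longleftrightarrow>
     (\<forall>f\<in>calg. bounded_cop (\<Phi> f) \<and> copnorm (\<Phi> f) \<le> supnorm f) \<and>
     (\<forall>f\<in>calg. \<forall>g\<in>calg. \<forall>x\<in>cell2. \<Phi> (\<lambda>t. f t + g t) x = (\<lambda>j. \<Phi> f x j + \<Phi> g x j)) \<and>
     (\<forall>f\<in>calg. \<forall>c. \<forall>x\<in>cell2. \<Phi> (\<lambda>t. c * f t) x = (\<lambda>j. c * \<Phi> f x j)) \<and>
     (\<forall>f\<in>calg. \<forall>g\<in>calg. \<forall>x\<in>cell2. \<Phi> (\<lambda>t. f t * g t) x = \<Phi> f (\<Phi> g x)) \<and>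
     (\<forall>f\<in>calg. \<forall>x\<in>cell2. \<forall>y\<in>cell2. cinner (\<Phi> f x) y = cinner x (\<Phi> (\<lambda>t. cnj (f t)) y)) \<and>
     (\<forall>x\<in>cell2. \<Phi> (\<lambda>t. 1) x = x) \<and>
     (\<forall>x\<in>cell2. \<Phi> (\<lambda>t. 1 / (\<i> + complex_of_real t)) x = resolv \<i> 1 A x)"

definition fc :: "(real \<Rightarrow> complex) \<Rightarrow> rop \<Rightarrow> cseq \<Rightarrow> cseq" where
  "fc f A x = (THE y. \<exists>\<Phi>. is_fc A \<Phi> \<and> \<Phi> f x = y)"

definition Psi :: "real \<Rightarrow> complex" where
  "Psi t = complex_of_real (t / sqrt (1 + t^2))"

definition riesz_dist :: "rop \<Rightarrow> rop \<Rightarrow> real" where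
  "riesz_dist A0 A1 = copnorm (\<lambda>x j. fc Psi A0 x j - fc Psi A1 x j)"

definition gap_dist :: "rop \<Rightarrow> rop \<Rightarrow> real" where
  "gap_dist A0 A1 =
     copnorm (\<lambda>x j. resolv \<i> 1 A0 x j - resolv \<i> 1 A1 x j)
   + copnorm (\<lambda>x j. resolv \<i> (-1) A0 x j - resolv \<i> (-1) A1 x j)"

definition ev :: "nat \<Rightarrow> nat \<Rightarrow> real" where
  "ev n j = (if Suc j = n then - real (Suc j) else real (Suc j))"

definition Aop :: "nat \<Rightarrow> rop" where
  "Aop n = ({x\<in>rell2. summable (\<lambda>j. (real (Suc j) * x j)^2)}, (\<lambda>x j. ev n j * x j))"

end

theory Submission
  imports Defs "HOL-Real_Asymp.Real_Asymp"
begin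


definition ek :: "nat \<Rightarrow> cseq" where "ek k = (\<lambda>j. if j = k then 1 else 0)"

lemma suminf_single: "(\<Sum>j. (if j = k then a else 0)) = (a::'a::{t2_space,comm_monoid_add,topological_space})"
proof -
  have "(\<lambda>j. if j = k then (\<lambda>_. a) j else 0) sums (\<lambda>_. a) k" by (rule sums_single)
  thus ?thesis by (simp add: sums_iff)
qed

lemma cinner_ek_right: "cinner z (ek k) = z k"
proof -
  have "(\<lambda>j. z j * cnj (ek k j)) = (\<lambda>j. if j = k then z k else 0)"
    by (auto simp: ek_def)
  thus ?thesis unfolding cinner_def by (simp add: suminf_single)
qed

lemma ek_cell2: "ek k \<in> cell2"
proof -
  have "(\<lambda>j. (cmod (ek k j))^2) = (\<lambda>j. if j = k then 1 else 0)" by (auto simp: ek_def)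
  moreover have "summable (\<lambda>j. if j = k then (1::real) else 0)"
    using sums_single[of k "\<lambda>_. (1::real)"] by (auto simp: sums_iff)
  ultimately show ?thesis by (simp add: cell2_def)
qed

lemma cnorm_ek: "cnorm (ek k) = 1"
proof -
  have "(\<lambda>j. (cmod (ek k j))^2) = (\<lambda>j. if j = k then 1 else 0)" by (auto simp: ek_def)
  thus ?thesis by (simp add: cnorm_def suminf_single)
qed

lemma cnorm_nonneg: "z \<in> cell2 \<Longrightarrow> cnorm z \<ge> 0"
  by (simp add: cnorm_def cell2_def suminf_nonneg)

lemma cnorm_zero: assumes "z \<in> cell2" "cnorm z = 0" shows "z = (\<lambda>j. 0)"
proof -
  have s: "summable (\<lambda>j. (cmod (z j))^2)" using assms(1) by (simp add: cell2_def)
  have "(\<Sum>j. (cmod (z j))^2) = 0" using assms(2) by (simp add: cnorm_def)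
  hence "(\<lambda>j. (cmod (z j))^2) = (\<lambda>j. 0)" using suminf_eq_zero_iff[OF s] by simp
  thus ?thesis by (auto simp: fun_eq_iff dest: fun_cong)
qed

lemma diag_cell2:
  assumes "\<And>j. cmod (d j) \<le> M" "x \<in> cell2"
  shows "(\<lambda>j. d j * x j) \<in> cell2" "cnorm (\<lambda>j. d j * x j) \<le> M * cnorm x"
proof -
  have M0: "M \<ge> 0" using assms(1)[of 0] norm_ge_zero order_trans by blast
  have s: "summable (\<lambda>j. (cmod (x j))^2)" using assms(2) by (simp add: cell2_def)
  have le: "(cmod (d j * x j))^2 \<le> M^2 * (cmod (x j))^2" for j
  proof -
    have "cmod (d j * x j) \<le> M * cmod (x j)" by (simp add: norm_mult assms(1) mult_right_mono)
    hence "(cmod (d j * x j))^2 \<le> (M * cmod (x j))^2" by (simp add: power_mono)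
    thus ?thesis by (simp add: power_mult_distrib)
  qed
  have s2: "summable (\<lambda>j. M^2 * (cmod (x j))^2)" using s by (rule summable_mult)
  have s3: "summable (\<lambda>j. (cmod (d j * x j))^2)"
    by (rule summable_comparison_test[OF _ s2]) (use le in auto)
  thus "(\<lambda>j. d j * x j) \<in> cell2" by (simp add: cell2_def)
  have "(\<Sum>j. (cmod (d j * x j))^2) \<le> (\<Sum>j. M^2 * (cmod (x j))^2)"
    by (rule suminf_le[OF le s3 s2])
  also have "\<dots> = M^2 * (\<Sum>j. (cmod (x j))^2)" by (rule suminf_mult[OF s])
  finally have "sqrt (\<Sum>j. (cmod (d j * x j))^2) \<le> sqrt (M^2 * (\<Sum>j. (cmod (x j))^2))"
    by (rule real_sqrt_le_mono)
  also have "\<dots> = M * cnorm x" using M0 by (simp add: cnorm_def real_sqrt_mult)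
  finally show "cnorm (\<lambda>j. d j * x j) \<le> M * cnorm x" by (simp add: cnorm_def)
qed

lemma copnorm_cong: "(\<And>x. x \<in> cell2 \<Longrightarrow> B x = B' x) \<Longrightarrow> copnorm B = copnorm B'"
  unfolding copnorm_def by (rule SUP_cong) auto

lemma copnorm_diag:
  assumes "\<And>j. cmod (d j) \<le> M" "cmod (d m) = M"
  shows "copnorm (\<lambda>x j. d j * x j) = M"
proof -
  have M0: "M \<ge> 0" using assms(2) by auto
  let ?S = "{x\<in>cell2. cnorm x \<le> 1}"
  have ub: "cnorm (\<lambda>j. d j * x j) \<le> M" if "x \<in> ?S" for x
  proof -
    have "cnorm (\<lambda>j. d j * x j) \<le> M * cnorm x" using diag_cell2 assms(1) that by auto
    also have "\<dots> \<le> M * 1" using that M0 by (intro mult_left_mono) auto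
    finally show ?thesis by simp
  qed
  have ne: "?S \<noteq> {}" using ek_cell2[of 0] cnorm_ek[of 0] by auto
  have le1: "copnorm (\<lambda>x j. d j * x j) \<le> M" unfolding copnorm_def
    by (rule cSUP_least[OF ne]) (use ub in auto)
  have bdd: "bdd_above ((\<lambda>x. cnorm (\<lambda>j. d j * x j)) ` ?S)"
    using ub by (auto intro!: bdd_aboveI2)
  have em: "ek m \<in> ?S" using ek_cell2 cnorm_ek by auto
  have "(\<lambda>j. (cmod (d j * ek m j))^2) = (\<lambda>j. if j = m then (cmod (d m))^2 else 0)" by (auto simp: ek_def)
  hence "cnorm (\<lambda>j. d j * ek m j) = sqrt (\<Sum>j. (if j = m then (cmod (d m))^2 else 0))"
    unfolding cnorm_def by simp
  also have "\<dots> = M" using assms(2) M0 by (simp add: suminf_single)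
  finally have "M \<le> copnorm (\<lambda>x j. d j * x j)" unfolding copnorm_def
    using cSUP_upper[OF em bdd] by simp
  with le1 show ?thesis by simp
qed



lemma calg_const: "(\<lambda>t. c) \<in> calg"
  by (auto simp: calg_def intro!: exI[of _ c])

lemma calg_add: "f \<in> calg \<Longrightarrow> g \<in> calg \<Longrightarrow> (\<lambda>t. f t + g t) \<in> calg"
  unfolding calg_def by (auto intro!: continuous_intros tendsto_add)

lemma calg_mult: "f \<in> calg \<Longrightarrow> g \<in> calg \<Longrightarrow> (\<lambda>t. f t * g t) \<in> calg"
  unfolding calg_def by (auto intro!: continuous_intros tendsto_mult)

lemma calg_diff: "f \<in> calg \<Longrightarrow> g \<in> calg \<Longrightarrow> (\<lambda>t. f t - g t) \<in> calg"
  unfolding calg_def by (auto intro!: continuous_intros tendsto_diff)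

lemma calg_cnj: "f \<in> calg \<Longrightarrow> (\<lambda>t. cnj (f t)) \<in> calg"
  unfolding calg_def by (auto intro!: continuous_intros tendsto_cnj)

lemma calg_isCont: "f \<in> calg \<Longrightarrow> isCont f t"
  unfolding calg_def using continuous_on_eq_continuous_at by blast

lemma calg_bounded: assumes "f \<in> calg" shows "\<exists>M. \<forall>t. cmod (f t) \<le> M"
proof -
  from assms obtain l1 l2 where c: "continuous_on UNIV f" and l1: "(f \<longlongrightarrow> l1) at_top"
     and l2: "(f \<longlongrightarrow> l2) at_bot" by (auto simp: calg_def)
  have "eventually (\<lambda>t. dist (f t) l1 < 1) at_top" using l1 by (rule tendstoD) simp
  then obtain T1 where T1: "\<And>t. t \<ge> T1 \<Longrightarrow> dist (f t) l1 < 1" by (auto simp: eventually_at_top_linorder)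
  have "eventually (\<lambda>t. dist (f t) l2 < 1) at_bot" using l2 by (rule tendstoD) simp
  then obtain T2 where T2: "\<And>t. t \<le> T2 \<Longrightarrow> dist (f t) l2 < 1" by (auto simp: eventually_at_bot_linorder)
  have ic: "\<forall>x. min T2 T1 \<le> x \<and> x \<le> T1 \<longrightarrow> isCont (\<lambda>t. cmod (f t)) x"
    using c by (simp add: continuous_on_eq_continuous_at isCont_norm)
  have "min T2 T1 \<le> T1" by simp
  from isCont_bounded[OF this ic] obtain B where B0: "\<forall>t. min T2 T1 \<le> t \<and> t \<le> T1 \<longrightarrow> cmod (f t) \<le> B"
    by blast
  have B: "\<And>t. t \<in> {T2..T1} \<Longrightarrow> cmod (f t) \<le> B" using B0 by auto
  have "cmod (f t) \<le> max B (max (cmod l1 + 1) (cmod l2 + 1))" for t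
  proof (cases "t \<ge> T1")
    case True
    hence "dist (f t) l1 < 1" by (rule T1)
    hence "cmod (f t) \<le> cmod l1 + 1" using norm_triangle_sub[of "f t" l1] by (simp add: dist_norm)
    thus ?thesis by linarith
  next
    case False
    show ?thesis
    proof (cases "t \<le> T2")
      case True
      hence "dist (f t) l2 < 1" by (rule T2)
      hence "cmod (f t) \<le> cmod l2 + 1" using norm_triangle_sub[of "f t" l2] by (simp add: dist_norm)
      thus ?thesis by linarith
    next
      case False2: False
      with False have "t \<in> {T2..T1}" by auto
      thus ?thesis using B by fastforce
    qed
  qed
  thus ?thesis by blast
qed

lemma norm_i_plus: "cmod (\<i> + complex_of_real t) = sqrt (1 + t^2)"
proof -
  have "\<i> + complex_of_real t = Complex t 1" by (simp add: complex_eq_iff)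
  thus ?thesis by (simp add: cmod_def add.commute)
qed

lemma norm_i_plus_ge: "cmod (\<i> + complex_of_real t) \<ge> 1" "cmod (\<i> + complex_of_real t) \<ge> \<bar>t\<bar>"
proof -
  show "cmod (\<i> + complex_of_real t) \<ge> 1" unfolding norm_i_plus using real_sqrt_le_mono[of 1 "1+t^2"] by simp
  have "sqrt (t^2) \<le> sqrt (1 + t^2)" by (rule real_sqrt_le_mono) simp
  thus "cmod (\<i> + complex_of_real t) \<ge> \<bar>t\<bar>" unfolding norm_i_plus by simp
qed

lemma i_plus_nz: "\<i> + complex_of_real t \<noteq> 0"
  using norm_i_plus_ge(1)[of t] by auto

lemma calg_res: "(\<lambda>t. 1 / (\<i> + complex_of_real t)) \<in> calg"
proof -
  have c: "continuous_on UNIV (\<lambda>t. 1 / (\<i> + complex_of_real t))"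
    by (intro continuous_intros) (auto simp: i_plus_nz)
  have n: "(\<lambda>t. cmod (1 / (\<i> + complex_of_real t))) = (\<lambda>t. 1 / sqrt (1 + t^2))"
    by (rule ext) (simp only: norm_divide norm_one norm_i_plus)
  have "((\<lambda>t. 1 / sqrt (1 + t^2)) \<longlongrightarrow> 0) at_top" by real_asymp
  hence "((\<lambda>t. cmod (1 / (\<i> + complex_of_real t))) \<longlongrightarrow> 0) at_top" unfolding n .
  hence 1: "((\<lambda>t. 1 / (\<i> + complex_of_real t)) \<longlongrightarrow> 0) at_top"
    by (simp only: tendsto_norm_zero_iff)
  have "((\<lambda>t. 1 / sqrt (1 + t^2)) \<longlongrightarrow> 0) at_bot" by real_asymp
  hence "((\<lambda>t. cmod (1 / (\<i> + complex_of_real t))) \<longlongrightarrow> 0) at_bot" unfolding n .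
  hence 2: "((\<lambda>t. 1 / (\<i> + complex_of_real t)) \<longlongrightarrow> 0) at_bot"
    by (simp only: tendsto_norm_zero_iff)
  show ?thesis using c 1 2 unfolding calg_def by blast
qed

lemma calg_Psi: "Psi \<in> calg"
proof -
  have Pd: "Psi = (\<lambda>t. complex_of_real (t / sqrt (1 + t^2)))" by (simp add: Psi_def fun_eq_iff)
  have pos: "\<And>t::real. 1 + t^2 > 0" by (simp add: add_pos_nonneg)
  hence "\<And>t::real. sqrt (1 + t^2) \<noteq> 0" by (metis less_irrefl real_sqrt_eq_zero_cancel_iff)
  hence c: "continuous_on UNIV Psi" unfolding Pd by (intro continuous_intros) auto
  have "((\<lambda>t. t / sqrt (1 + t^2)) \<longlongrightarrow> 1) at_top" by real_asymp
  hence 1: "(Psi \<longlongrightarrow> complex_of_real 1) at_top" unfolding Pd by (rule tendsto_of_real)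
  have "((\<lambda>t. t / sqrt (1 + t^2)) \<longlongrightarrow> -1) at_bot" by real_asymp
  hence 2: "(Psi \<longlongrightarrow> complex_of_real (-1)) at_bot" unfolding Pd by (rule tendsto_of_real)
  show ?thesis using c 1 2 unfolding calg_def by blast
qed



lemma ev_abs: "\<bar>ev n j\<bar> = real (Suc j)"
  by (simp add: ev_def)

lemma ev_0: "ev 0 j = real (Suc j)"
  by (simp add: ev_def)

lemma ev_diff: "n \<ge> 1 \<Longrightarrow> ev n j = (if j = n - 1 then - real n else ev 0 j)"
  by (auto simp: ev_def)

lemma ev_diff0: "n \<ge> 1 \<Longrightarrow> ev 0 (n - 1) = real n"
  by (simp add: ev_def)

lemma cact_Aop: "cact (Aop n) z = (\<lambda>j. complex_of_real (ev n j) * z j)"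
  by (auto simp: cact_def Aop_def complex_eq_iff fun_eq_iff)

lemma cdom_bound:
  assumes y: "y \<in> cell2" and b1: "\<And>j. cmod (x j) \<le> cmod (y j)"
      and b2: "\<And>j. real (Suc j) * cmod (x j) \<le> cmod (y j)"
  shows "x \<in> cdom (Aop n)"
proof -
  have sy: "summable (\<lambda>j. (cmod (y j))^2)" using y by (simp add: cell2_def)
  have gen: "(\<lambda>j. f (x j)) \<in> fst (Aop n)" if hf: "\<And>z. \<bar>f z\<bar> \<le> cmod z" for f
  proof -
    have "summable (\<lambda>j. (f (x j))^2)"
    proof (rule summable_comparison_test[OF _ sy], intro exI[of _ 0] allI impI)
      fix j
      have "\<bar>f (x j)\<bar> \<le> cmod (y j)" using hf[of "x j"] b1[of j] by linarith
      hence "\<bar>f (x j)\<bar>^2 \<le> (cmod (y j))^2" by (rule power_mono) simp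
      thus "norm ((f (x j))^2) \<le> (cmod (y j))^2" by simp
    qed
    moreover have "summable (\<lambda>j. (real (Suc j) * f (x j))^2)"
    proof (rule summable_comparison_test[OF _ sy], intro exI[of _ 0] allI impI)
      fix j
      have "real (Suc j) * \<bar>f (x j)\<bar> \<le> real (Suc j) * cmod (x j)"
        using hf[of "x j"] by (intro mult_left_mono) auto
      hence "\<bar>real (Suc j) * f (x j)\<bar> \<le> cmod (y j)" using b2[of j]
        unfolding abs_mult abs_of_nat by linarith
      hence "\<bar>real (Suc j) * f (x j)\<bar>^2 \<le> (cmod (y j))^2" by (rule power_mono) simp
      thus "norm ((real (Suc j) * f (x j))^2) \<le> (cmod (y j))^2" by simp
    qed
    ultimately show ?thesis by (simp add: Aop_def rell2_def)
  qed
  have "(\<lambda>j. Re (x j)) \<in> fst (Aop n)" by (rule gen) (rule abs_Re_le_cmod)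
  moreover have "(\<lambda>j. Im (x j)) \<in> fst (Aop n)" by (rule gen) (rule abs_Im_le_cmod)
  ultimately show ?thesis by (simp add: cdom_def)
qed

lemma resolv_Aop:
  assumes s: "s = 1 \<or> s = -1" and y: "y \<in> cell2"
  shows "resolv \<i> (complex_of_real s) (Aop n) y = (\<lambda>j. y j / (\<i> + complex_of_real (s * ev n j)))"
proof -
  let ?x = "\<lambda>j. y j / (\<i> + complex_of_real (s * ev n j))"
  have abs_s: "\<bar>s * ev n j\<bar> = real (Suc j)" for j using s by (auto simp: ev_abs abs_mult)
  have nz: "\<i> + complex_of_real (s * ev n j) \<noteq> 0" for j by (rule i_plus_nz)
  have b1: "cmod (?x j) \<le> cmod (y j)" for j
  proof -
    have "cmod (?x j) = cmod (y j) / cmod (\<i> + complex_of_real (s * ev n j))" by (simp add: norm_divide)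
    also have "\<dots> \<le> cmod (y j) / 1" using norm_i_plus_ge(1)[of "s * ev n j"] nz[of j] by (intro divide_left_mono) auto
    finally show ?thesis by simp
  qed
  have b2: "real (Suc j) * cmod (?x j) \<le> cmod (y j)" for j
  proof -
    let ?d = "cmod (\<i> + complex_of_real (s * ev n j))"
    have d: "real (Suc j) \<le> ?d" using norm_i_plus_ge(2)[of "s * ev n j"] abs_s[of j] by simp
    have dp: "?d > 0" using nz[of j] by simp
    have "real (Suc j) * cmod (?x j) = real (Suc j) * cmod (y j) / ?d" by (simp add: norm_divide)
    also have "\<dots> \<le> ?d * cmod (y j) / ?d" using d dp by (intro divide_right_mono mult_right_mono) auto
    also have "\<dots> = cmod (y j)" using dp by simp
    finally show ?thesis .
  qed
  have xd: "?x \<in> cdom (Aop n)" by (rule cdom_bound[OF y b1 b2])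
  have eq: "(\<lambda>j. \<i> * x j + complex_of_real s * cact (Aop n) x j) = (\<lambda>j. (\<i> + complex_of_real (s * ev n j)) * x j)" for x
    by (simp add: cact_Aop algebra_simps)
  show ?thesis unfolding resolv_def
  proof (rule the_equality)
    show "?x \<in> cdom (Aop n) \<and> (\<lambda>j. \<i> * ?x j + complex_of_real s * cact (Aop n) ?x j) = y"
      using xd unfolding eq
      by (simp only: times_divide_eq_right nonzero_mult_div_cancel_left[OF nz] simp_thms)
  next
    fix x assume "x \<in> cdom (Aop n) \<and> (\<lambda>j. \<i> * x j + complex_of_real s * cact (Aop n) x j) = y"
    hence "(\<lambda>j. (\<i> + complex_of_real (s * ev n j)) * x j) = y" by (simp add: eq)
    thus "x = ?x" using nz by (auto simp: fun_eq_iff field_simps)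
  qed
qed

lemma resolv_Aop_p: "y \<in> cell2 \<Longrightarrow> resolv \<i> 1 (Aop n) y = (\<lambda>j. y j / (\<i> + complex_of_real (ev n j)))"
  using resolv_Aop[of 1 y n] by simp

lemma resolv_Aop_m: "y \<in> cell2 \<Longrightarrow> resolv \<i> (-1) (Aop n) y = (\<lambda>j. y j / (\<i> + complex_of_real (- ev n j)))"
  using resolv_Aop[of "-1" y n] by simp



lemma bcop_lin: "bounded_cop B \<Longrightarrow> x \<in> cell2 \<Longrightarrow> y \<in> cell2 \<Longrightarrow>
   B (\<lambda>j. a * x j + b * y j) = (\<lambda>j. a * B x j + b * B y j)"
  unfolding bounded_cop_def by blast

lemma zero_cell2: "(\<lambda>j. 0::complex) \<in> cell2" by (simp add: cell2_def)

lemma bcop_zero: "bounded_cop B \<Longrightarrow> B (\<lambda>j. 0) = (\<lambda>j. 0)"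
  using bcop_lin[OF _ zero_cell2 zero_cell2, of B 0 0] by simp

lemma bcop_scale: "bounded_cop B \<Longrightarrow> x \<in> cell2 \<Longrightarrow> B (\<lambda>j. a * x j) = (\<lambda>j. a * B x j)"
proof -
  assume b: "bounded_cop B" and x: "x \<in> cell2"
  show ?thesis using bcop_lin[OF b x x, of a 0] by simp
qed

lemma bcop_norm_le:
  assumes b: "bounded_cop B" and x: "x \<in> cell2" "cnorm x \<le> 1"
  shows "cnorm (B x) \<le> copnorm B"
proof -
  from b obtain K where K: "\<And>x. x \<in> cell2 \<Longrightarrow> cnorm (B x) \<le> K * cnorm x"
    unfolding bounded_cop_def by blast
  have "cnorm (B y) \<le> \<bar>K\<bar>" if "y \<in> {x\<in>cell2. cnorm x \<le> 1}" for y
  proof -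
    have y: "y \<in> cell2" "cnorm y \<le> 1" "cnorm y \<ge> 0" using that cnorm_nonneg by auto
    have "K * cnorm y \<le> \<bar>K\<bar>"
    proof (cases "K \<ge> 0")
      case True thus ?thesis using y mult_left_mono[of "cnorm y" 1 K] by simp
    next
      case False
      hence "K * cnorm y \<le> 0" using y(3) by (simp add: mult_nonpos_nonneg)
      thus ?thesis using False by linarith
    qed
    thus ?thesis using K[OF y(1)] by linarith
  qed
  hence bdd: "bdd_above ((\<lambda>x. cnorm (B x)) ` {x\<in>cell2. cnorm x \<le> 1})"
    by (auto intro!: bdd_aboveI2)
  show ?thesis unfolding copnorm_def by (rule cSUP_upper[OF _ bdd]) (use x in auto)
qed

lemma supnorm_ge: assumes "f \<in> calg" shows "cmod (f t) \<le> supnorm f"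
proof -
  obtain M where "\<And>t. cmod (f t) \<le> M" using calg_bounded[OF assms] by blast
  hence "bdd_above (range (\<lambda>t. cmod (f t)))" by (auto intro!: bdd_aboveI2)
  thus ?thesis unfolding supnorm_def by (rule cSUP_upper[OF UNIV_I])
qed

lemma supnorm_le: "(\<And>t. cmod (f t) \<le> e) \<Longrightarrow> supnorm f \<le> e"
  unfolding supnorm_def by (rule cSUP_least) auto

lemma cinner_scale_ek: "cinner x (\<lambda>j. c * ek k j) = x k * cnj c"
proof -
  have "(\<lambda>j. x j * cnj (c * ek k j)) = (\<lambda>j. if j = k then x k * cnj c else 0)"
    by (auto simp: ek_def)
  thus ?thesis unfolding cinner_def by (simp add: suminf_single)
qed

definition Phi0 :: "nat \<Rightarrow> (real \<Rightarrow> complex) \<Rightarrow> cseq \<Rightarrow> cseq" where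
  "Phi0 n f x = (\<lambda>j. f (ev n j) * x j)"

lemma Phi0_bc: assumes f: "f \<in> calg" shows "bounded_cop (Phi0 n f) \<and> copnorm (Phi0 n f) \<le> supnorm f"
proof -
  have bd: "\<And>j. cmod (f (ev n j)) \<le> supnorm f" using supnorm_ge[OF f] by blast
  have s0: "supnorm f \<ge> 0" using supnorm_ge[OF f, of 0] norm_ge_zero order_trans by blast
  have c1: "\<forall>x\<in>cell2. Phi0 n f x \<in> cell2" unfolding Phi0_def by (intro ballI diag_cell2(1)[OF bd])
  have c2: "\<forall>x\<in>cell2. \<forall>y\<in>cell2. \<forall>a b. Phi0 n f (\<lambda>j. a * x j + b * y j) = (\<lambda>j. a * Phi0 n f x j + b * Phi0 n f y j)"
    unfolding Phi0_def by (simp add: algebra_simps)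
  have c3: "\<forall>x\<in>cell2. cnorm (Phi0 n f x) \<le> supnorm f * cnorm x"
    unfolding Phi0_def by (intro ballI diag_cell2(2)[OF bd])
  have bc: "bounded_cop (Phi0 n f)" unfolding bounded_cop_def using c1 c2 c3 by blast
  have "copnorm (Phi0 n f) \<le> supnorm f" unfolding copnorm_def
  proof (rule cSUP_least)
    show "{x \<in> cell2. cnorm x \<le> 1} \<noteq> {}" using ek_cell2[of 0] cnorm_ek[of 0] by auto
  next
    fix x assume x: "x \<in> {x \<in> cell2. cnorm x \<le> 1}"
    have "cnorm (Phi0 n f x) \<le> supnorm f * cnorm x" using c3 x by blast
    also have "\<dots> \<le> supnorm f * 1" using x s0 by (intro mult_left_mono) auto
    finally show "cnorm (Phi0 n f x) \<le> supnorm f" by simp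
  qed
  with bc show ?thesis by blast
qed

lemma is_fc_Phi0: "is_fc (Aop n) (Phi0 n)"
proof -
  have 1: "\<forall>f\<in>calg. bounded_cop (Phi0 n f) \<and> copnorm (Phi0 n f) \<le> supnorm f"
    using Phi0_bc by blast
  have 2: "\<forall>f g x. Phi0 n (\<lambda>t. f t + g t) x = (\<lambda>j. Phi0 n f x j + Phi0 n g x j)"
    by (simp add: Phi0_def distrib_right)
  have 3: "\<forall>f c x. Phi0 n (\<lambda>t. c * f t) x = (\<lambda>j. c * Phi0 n f x j)"
    by (simp add: Phi0_def mult.assoc)
  have 4: "\<forall>f g x. Phi0 n (\<lambda>t. f t * g t) x = Phi0 n f (Phi0 n g x)"
    by (simp add: Phi0_def mult.assoc)
  have 5: "\<forall>f x y. cinner (Phi0 n f x) y = cinner x (Phi0 n (\<lambda>t. cnj (f t)) y)"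
    unfolding cinner_def Phi0_def by (simp add: mult.commute mult.left_commute)
  have 6: "\<forall>x. Phi0 n (\<lambda>t. 1) x = x" by (simp add: Phi0_def)
  have 7: "\<forall>x\<in>cell2. Phi0 n (\<lambda>t. 1 / (\<i> + complex_of_real t)) x = resolv \<i> 1 (Aop n) x"
    by (simp add: Phi0_def resolv_Aop_p)
  show ?thesis unfolding is_fc_def using 1 2 3 4 5 6 7 by blast
qed



lemma fc_bc: "is_fc A \<Phi> \<Longrightarrow> f \<in> calg \<Longrightarrow> bounded_cop (\<Phi> f)"
  unfolding is_fc_def by blast
lemma fc_nrm: "is_fc A \<Phi> \<Longrightarrow> f \<in> calg \<Longrightarrow> copnorm (\<Phi> f) \<le> supnorm f"
  unfolding is_fc_def by blast
lemma fc_add: "is_fc A \<Phi> \<Longrightarrow> f \<in> calg \<Longrightarrow> g \<in> calg \<Longrightarrow> x \<in> cell2 \<Longrightarrow>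
   \<Phi> (\<lambda>t. f t + g t) x = (\<lambda>j. \<Phi> f x j + \<Phi> g x j)"
  unfolding is_fc_def by blast
lemma fc_scal: "is_fc A \<Phi> \<Longrightarrow> f \<in> calg \<Longrightarrow> x \<in> cell2 \<Longrightarrow>
   \<Phi> (\<lambda>t. c * f t) x = (\<lambda>j. c * \<Phi> f x j)"
  unfolding is_fc_def by blast
lemma fc_mult: "is_fc A \<Phi> \<Longrightarrow> f \<in> calg \<Longrightarrow> g \<in> calg \<Longrightarrow> x \<in> cell2 \<Longrightarrow>
   \<Phi> (\<lambda>t. f t * g t) x = \<Phi> f (\<Phi> g x)"
  unfolding is_fc_def by blast
lemma fc_adj: "is_fc A \<Phi> \<Longrightarrow> f \<in> calg \<Longrightarrow> x \<in> cell2 \<Longrightarrow> y \<in> cell2 \<Longrightarrow>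
   cinner (\<Phi> f x) y = cinner x (\<Phi> (\<lambda>t. cnj (f t)) y)"
  unfolding is_fc_def by blast
lemma fc_one: "is_fc A \<Phi> \<Longrightarrow> x \<in> cell2 \<Longrightarrow> \<Phi> (\<lambda>t. 1) x = x"
  unfolding is_fc_def by blast
lemma fc_res: "is_fc A \<Phi> \<Longrightarrow> x \<in> cell2 \<Longrightarrow> \<Phi> (\<lambda>t. 1 / (\<i> + complex_of_real t)) x = resolv \<i> 1 A x"
  unfolding is_fc_def by blast

lemma D_out: fixes \<delta> \<mu> t :: real shows "\<delta> > 0 \<Longrightarrow> \<bar>t - \<mu>\<bar> > \<delta> \<Longrightarrow> max (\<delta>^2) ((t - \<mu>)^2) = (t - \<mu>)^2"
proof -
  assume "\<delta> > 0" "\<bar>t - \<mu>\<bar> > \<delta>"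
  hence "\<delta>^2 < \<bar>t - \<mu>\<bar>^2" by (intro power_strict_mono) auto
  thus ?thesis by simp
qed

lemma D_in: fixes \<delta> \<mu> t :: real shows "\<bar>t - \<mu>\<bar> \<le> \<delta> \<Longrightarrow> max (\<delta>^2) ((t - \<mu>)^2) = \<delta>^2"
proof -
  assume "\<bar>t - \<mu>\<bar> \<le> \<delta>"
  hence "\<bar>t - \<mu>\<bar>^2 \<le> \<delta>^2" by (intro power_mono) auto
  thus ?thesis by simp
qed

lemma D_pos: fixes \<delta> \<mu> t :: real shows "\<delta> > 0 \<Longrightarrow> max (\<delta>^2) ((t - \<mu>)^2) > 0"
  by (simp add: less_max_iff_disj)

lemma q_out: fixes \<delta> \<mu> t :: real shows "\<delta> > 0 \<Longrightarrow> \<bar>t - \<mu>\<bar> > \<delta> \<Longrightarrow> (\<mu> - t) / max (\<delta>^2) ((t - \<mu>)^2) = 1 / (\<mu> - t)"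
proof -
  assume a: "\<delta> > 0" "\<bar>t - \<mu>\<bar> > \<delta>"
  hence nz: "\<mu> - t \<noteq> 0" by auto
  have "(t - \<mu>)^2 = (\<mu> - t) * (\<mu> - t)" by (simp add: power2_eq_square algebra_simps)
  thus ?thesis using D_out[OF a] nz by simp
qed

lemma psi_identity:
  fixes u t \<mu> :: real
  assumes "u \<noteq> 0" "t = \<mu> - u"
  shows "(\<i> + complex_of_real t) * (\<i> + complex_of_real \<mu>) * complex_of_real (1 / u) =
         (\<i> + complex_of_real \<mu>) * (-1 + (\<i> + complex_of_real \<mu>) * complex_of_real (1 / u))"
proof -
  have u: "complex_of_real u \<noteq> 0" using assms(1) by simp
  show ?thesis using u unfolding assms(2) by (simp add: field_simps)
qed

lemma psi_lim:
  fixes \<delta> \<mu> :: real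
  assumes d: "\<delta> > 0" and ev: "eventually (\<lambda>t. \<bar>t - \<mu>\<bar> > \<delta>) F"
      and l: "((\<lambda>t. 1 / (\<mu> - t)) \<longlongrightarrow> 0) F"
  shows "((\<lambda>t. (\<i> + complex_of_real t) * (\<i> + complex_of_real \<mu>) *
              complex_of_real ((\<mu> - t) / max (\<delta>^2) ((t - \<mu>)^2))) \<longlongrightarrow>
          (\<i> + complex_of_real \<mu>) * (-1 + (\<i> + complex_of_real \<mu>) * complex_of_real 0)) F"
proof -
  have e2: "eventually (\<lambda>t. (\<i> + complex_of_real \<mu>) * (-1 + (\<i> + complex_of_real \<mu>) * complex_of_real (1 / (\<mu> - t)))
      = (\<i> + complex_of_real t) * (\<i> + complex_of_real \<mu>) *
              complex_of_real ((\<mu> - t) / max (\<delta>^2) ((t - \<mu>)^2))) F"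
    using ev
  proof (rule eventually_mono)
    fix t assume t: "\<bar>t - \<mu>\<bar> > \<delta>"
    hence "\<mu> - t \<noteq> 0" using d by auto
    thus "(\<i> + complex_of_real \<mu>) * (-1 + (\<i> + complex_of_real \<mu>) * complex_of_real (1 / (\<mu> - t)))
      = (\<i> + complex_of_real t) * (\<i> + complex_of_real \<mu>) *
              complex_of_real ((\<mu> - t) / max (\<delta>^2) ((t - \<mu>)^2))"
      unfolding q_out[OF d t] using psi_identity[of "\<mu> - t" t \<mu>] by simp
  qed
  have "((\<lambda>t. (\<i> + complex_of_real \<mu>) * (-1 + (\<i> + complex_of_real \<mu>) * complex_of_real (1 / (\<mu> - t))))
         \<longlongrightarrow> (\<i> + complex_of_real \<mu>) * (-1 + (\<i> + complex_of_real \<mu>) * complex_of_real 0)) F"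
    by (intro tendsto_intros l)
  thus ?thesis using tendsto_cong[OF e2] by simp
qed

lemma cut_lim:
  fixes \<delta> \<mu> :: real
  assumes d: "\<delta> > 0" and ev: "eventually (\<lambda>t. \<bar>t - \<mu>\<bar> > \<delta>) F"
  shows "((\<lambda>t. complex_of_real (1 - (\<mu> - t) * ((\<mu> - t) / max (\<delta>^2) ((t - \<mu>)^2)))) \<longlongrightarrow> 0) F"
proof (rule tendsto_eventually)
  show "eventually (\<lambda>t. complex_of_real (1 - (\<mu> - t) * ((\<mu> - t) / max (\<delta>^2) ((t - \<mu>)^2))) = 0) F"
    using ev
  proof (rule eventually_mono)
    fix t assume t: "\<bar>t - \<mu>\<bar> > \<delta>"
    hence "\<mu> - t \<noteq> 0" using d by auto
    thus "complex_of_real (1 - (\<mu> - t) * ((\<mu> - t) / max (\<delta>^2) ((t - \<mu>)^2))) = 0"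
      unfolding q_out[OF d t] by simp
  qed
qed

lemma ev_top: fixes \<delta> \<mu> :: real shows "\<delta> > 0 \<Longrightarrow> eventually (\<lambda>t. \<bar>t - \<mu>\<bar> > \<delta>) at_top"
  using eventually_gt_at_top[of "\<mu> + \<delta>"] by (rule eventually_mono) auto

lemma ev_bot: fixes \<delta> \<mu> :: real shows "\<delta> > 0 \<Longrightarrow> eventually (\<lambda>t. \<bar>t - \<mu>\<bar> > \<delta>) at_bot"
  using eventually_gt_at_bot[of "\<mu> - \<delta>"] by (rule eventually_mono) auto

lemma calg_psi:
  fixes \<delta> \<mu> :: real
  assumes d: "\<delta> > 0"
  shows "(\<lambda>t. (\<i> + complex_of_real t) * (\<i> + complex_of_real \<mu>) *
              complex_of_real ((\<mu> - t) / max (\<delta>^2) ((t - \<mu>)^2))) \<in> calg"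
proof -
  have c: "continuous_on UNIV (\<lambda>t. (\<i> + complex_of_real t) * (\<i> + complex_of_real \<mu>) *
              complex_of_real ((\<mu> - t) / max (\<delta>^2) ((t - \<mu>)^2)))"
  proof -
    have nz: "\<And>t. max (\<delta>^2) ((t - \<mu>)^2) \<noteq> 0" using D_pos[OF d] by (metis less_irrefl)
    show ?thesis by (intro continuous_intros) (simp add: nz)
  qed
  have l1: "((\<lambda>t. 1 / (\<mu> - t)) \<longlongrightarrow> 0) at_top" by real_asymp
  have l2: "((\<lambda>t. 1 / (\<mu> - t)) \<longlongrightarrow> 0) at_bot" by real_asymp
  show ?thesis unfolding calg_def
    using c psi_lim[OF d ev_top[OF d] l1] psi_lim[OF d ev_bot[OF d] l2] by blast
qed

lemma calg_cut:
  fixes \<delta> \<mu> :: real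
  assumes d: "\<delta> > 0"
  shows "(\<lambda>t. complex_of_real (1 - (\<mu> - t) * ((\<mu> - t) / max (\<delta>^2) ((t - \<mu>)^2)))) \<in> calg"
proof -
  have c: "continuous_on UNIV (\<lambda>t. complex_of_real (1 - (\<mu> - t) * ((\<mu> - t) / max (\<delta>^2) ((t - \<mu>)^2))))"
  proof -
    have nz: "\<And>t. max (\<delta>^2) ((t - \<mu>)^2) \<noteq> 0" using D_pos[OF d] by (metis less_irrefl)
    show ?thesis by (intro continuous_intros) (simp add: nz)
  qed
  show ?thesis unfolding calg_def
    using c cut_lim[OF d ev_top[OF d]] cut_lim[OF d ev_bot[OF d]] by blast
qed



lemma pg_gen: "(a::complex) \<noteq> 0 \<Longrightarrow> b \<noteq> 0 \<Longrightarrow> a * b * Q * (1 / a + - (1 / b) * 1) = (b - a) * Q"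
  by (simp add: field_simps)

lemma fc_eigen:
  fixes \<mu> :: real
  assumes fc: "is_fc A \<Phi>" and f: "f \<in> calg"
    and res: "\<Phi> (\<lambda>t. 1 / (\<i> + complex_of_real t)) (ek m) = (\<lambda>j. (1 / (\<i> + complex_of_real \<mu>)) * ek m j)"
  shows "\<Phi> f (ek m) = (\<lambda>j. f \<mu> * ek m j)"
proof -
  define e where "e = ek m"
  have e: "e \<in> cell2" "cnorm e \<le> 1" using ek_cell2 cnorm_ek e_def by auto
  define r where "r = (\<lambda>t::real. 1 / (\<i> + complex_of_real t))"
  define c where "c = 1 / (\<i> + complex_of_real \<mu>)"
  have rc: "r \<in> calg" unfolding r_def by (rule calg_res)
  have Pr: "\<Phi> r e = (\<lambda>j. c * e j)" using res unfolding r_def c_def e_def .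
  have one: "\<Phi> (\<lambda>t. 1) e = e" by (rule fc_one[OF fc e(1)])
  have c1: "(\<lambda>t::real. (1::complex)) \<in> calg" by (rule calg_const)
  have Pc: "\<Phi> (\<lambda>t. - c * 1) e = (\<lambda>j. - c * e j)"
    using fc_scal[OF fc c1 e(1), of "- c"] unfolding one .
  define g1 where "g1 = (\<lambda>t. r t + - c * 1)"
  have cc: "(\<lambda>t::real. - c * 1) \<in> calg" by (rule calg_const)
  have g1c: "g1 \<in> calg" unfolding g1_def by (rule calg_add[OF rc cc])
  have Pg1: "\<Phi> g1 e = (\<lambda>j. 0)"
  proof -
    have "\<Phi> g1 e = (\<lambda>j. \<Phi> r e j + \<Phi> (\<lambda>t. - c * 1) e j)"
      unfolding g1_def by (rule fc_add[OF fc rc cc e(1)])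
    also have "\<dots> = (\<lambda>j. 0)" unfolding Pr Pc by simp
    finally show ?thesis .
  qed
  define k where "k = (\<lambda>t. f t - f \<mu>)"
  have kc: "k \<in> calg" unfolding k_def by (rule calg_diff[OF f calg_const])
  have k0: "k \<mu> = 0" by (simp add: k_def)
  have Pkc: "\<Phi> k e \<in> cell2" using fc_bc[OF fc kc] e(1) unfolding bounded_cop_def by blast
  have main: "cnorm (\<Phi> k e) \<le> \<epsilon>" if \<epsilon>: "\<epsilon> > 0" for \<epsilon>
  proof -
    have "isCont k \<mu>" by (rule calg_isCont[OF kc])
    hence "eventually (\<lambda>t. dist (k t) (k \<mu>) < \<epsilon>) (at \<mu>)"
      unfolding isCont_def using \<epsilon> by (rule tendstoD)
    then obtain d0 where d0: "d0 > 0" and d0p: "\<And>t. t \<noteq> \<mu> \<Longrightarrow> dist t \<mu> < d0 \<Longrightarrow> dist (k t) (k \<mu>) < \<epsilon>"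
      unfolding eventually_at by auto
    define \<delta> where "\<delta> = d0 / 2"
    have d: "\<delta> > 0" using d0 by (simp add: \<delta>_def)
    have close: "cmod (k t) < \<epsilon>" if "\<bar>t - \<mu>\<bar> \<le> \<delta>" for t
    proof (cases "t = \<mu>")
      case True thus ?thesis using k0 \<epsilon> by simp
    next
      case False
      have "dist t \<mu> < d0" using that d0 by (simp add: dist_real_def \<delta>_def)
      thus ?thesis using d0p[OF False] k0 by simp
    qed
    define q where "q = (\<lambda>t. (\<mu> - t) / max (\<delta>^2) ((t - \<mu>)^2))"
    define \<phi> where "\<phi> = (\<lambda>t. (\<mu> - t) * q t)"
    define \<psi> where "\<psi> = (\<lambda>t. (\<i> + complex_of_real t) * (\<i> + complex_of_real \<mu>) * complex_of_real (q t))"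
    define h where "h = (\<lambda>t. k t * \<psi> t)"
    define cut where "cut = (\<lambda>t. complex_of_real (1 - \<phi> t))"
    define mm where "mm = (\<lambda>t. k t * cut t)"
    have \<psi>c: "\<psi> \<in> calg" unfolding \<psi>_def q_def by (rule calg_psi[OF d])
    have cutc: "cut \<in> calg" unfolding cut_def \<phi>_def q_def by (rule calg_cut[OF d])
    have hc: "h \<in> calg" unfolding h_def by (rule calg_mult[OF kc \<psi>c])
    have mmc: "mm \<in> calg" unfolding mm_def by (rule calg_mult[OF kc cutc])
    have hg1c: "(\<lambda>t. h t * g1 t) \<in> calg" by (rule calg_mult[OF hc g1c])
    have Dnz: "max (\<delta>^2) ((t - \<mu>)^2) \<noteq> 0" for t using D_pos[OF d, of t \<mu>] by linarith
    have pg: "\<psi> t * g1 t = complex_of_real (\<phi> t)" for t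
    proof -
      have nz1: "\<i> + complex_of_real t \<noteq> 0" by (rule i_plus_nz)
      have nz2: "\<i> + complex_of_real \<mu> \<noteq> 0" by (rule i_plus_nz)
      have "\<psi> t * g1 t = ((\<i> + complex_of_real \<mu>) - (\<i> + complex_of_real t)) * complex_of_real (q t)"
        unfolding \<psi>_def g1_def r_def c_def by (rule pg_gen[OF nz1 nz2])
      thus ?thesis unfolding \<phi>_def by simp
    qed
    have dec: "k = (\<lambda>t. h t * g1 t + mm t)"
    proof
      fix t
      have "h t * g1 t + mm t = k t * (\<psi> t * g1 t) + k t * cut t"
        unfolding h_def mm_def by (simp add: algebra_simps)
      also have "\<dots> = k t" unfolding pg cut_def by (simp add: algebra_simps)
      finally show "k t = h t * g1 t + mm t" by simp
    qed
    have "\<Phi> k e = \<Phi> (\<lambda>t. h t * g1 t + mm t) e"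
      by (rule arg_cong[of _ _ "\<lambda>g. \<Phi> g e"]) (rule dec)
    also have "\<dots> = (\<lambda>j. \<Phi> (\<lambda>t. h t * g1 t) e j + \<Phi> mm e j)"
      by (rule fc_add[OF fc hg1c mmc e(1)])
    also have "\<Phi> (\<lambda>t. h t * g1 t) e = (\<lambda>j. 0)"
      unfolding fc_mult[OF fc hc g1c e(1)] Pg1 by (rule bcop_zero[OF fc_bc[OF fc hc]])
    finally have Pk: "\<Phi> k e = \<Phi> mm e" by simp
    have "cnorm (\<Phi> mm e) \<le> copnorm (\<Phi> mm)" by (rule bcop_norm_le[OF fc_bc[OF fc mmc] e])
    also have "\<dots> \<le> supnorm mm" by (rule fc_nrm[OF fc mmc])
    also have "\<dots> \<le> \<epsilon>"
    proof (rule supnorm_le)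
      fix t
      show "cmod (mm t) \<le> \<epsilon>"
      proof (cases "\<bar>t - \<mu>\<bar> \<le> \<delta>")
        case True
        have D: "max (\<delta>^2) ((t - \<mu>)^2) = \<delta>^2" by (rule D_in[OF True])
        have sq: "(\<mu> - t)^2 \<le> \<delta>^2"
        proof -
          have "\<bar>\<mu> - t\<bar>^2 \<le> \<delta>^2" using True by (intro power_mono) auto
          thus ?thesis by simp
        qed
        have "\<phi> t = (\<mu> - t)^2 / \<delta>^2" unfolding \<phi>_def q_def D by (simp add: power2_eq_square)
        hence ph: "0 \<le> \<phi> t" "\<phi> t \<le> 1" using sq d by auto
        have "cmod (mm t) = cmod (k t) * \<bar>1 - \<phi> t\<bar>" unfolding mm_def cut_def norm_mult norm_of_real ..
        also have "\<dots> \<le> cmod (k t) * 1" using ph by (intro mult_left_mono) auto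
        also have "\<dots> \<le> \<epsilon>" using close[OF True] by simp
        finally show ?thesis .
      next
        case False
        hence F: "\<bar>t - \<mu>\<bar> > \<delta>" by simp
        hence "\<mu> - t \<noteq> 0" using d by auto
        hence "\<phi> t = 1" unfolding \<phi>_def q_def q_out[OF d F] by simp
        thus ?thesis unfolding mm_def cut_def using \<epsilon> by simp
      qed
    qed
    finally show ?thesis unfolding Pk .
  qed
  have Pk0: "\<Phi> k e = (\<lambda>j. 0)"
  proof (rule cnorm_zero[OF Pkc])
    have ge: "cnorm (\<Phi> k e) \<ge> 0" by (rule cnorm_nonneg[OF Pkc])
    show "cnorm (\<Phi> k e) = 0"
    proof (rule ccontr)
      assume "cnorm (\<Phi> k e) \<noteq> 0"
      hence pos: "cnorm (\<Phi> k e) > 0" using ge by simp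
      have "cnorm (\<Phi> k e) \<le> cnorm (\<Phi> k e) / 2" by (rule main) (use pos in simp)
      thus False using pos by simp
    qed
  qed
  have fcst: "(\<lambda>t::real. f \<mu>) \<in> calg" by (rule calg_const)
  have "\<Phi> f e = \<Phi> (\<lambda>t. f \<mu> + k t) e"
    by (rule arg_cong[of _ _ "\<lambda>g. \<Phi> g e"]) (simp add: k_def fun_eq_iff)
  also have "\<dots> = (\<lambda>j. \<Phi> (\<lambda>t. f \<mu>) e j + \<Phi> k e j)" by (rule fc_add[OF fc fcst kc e(1)])
  also have "\<Phi> (\<lambda>t. f \<mu>) e = (\<lambda>j. f \<mu> * e j)"
    using fc_scal[OF fc c1 e(1), of "f \<mu>"] unfolding one by simp
  finally have X: "\<Phi> f e = (\<lambda>j. f \<mu> * e j + \<Phi> k e j)" .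
  show ?thesis using X unfolding Pk0 by (simp add: e_def)
qed



lemma res_ek: "resolv \<i> 1 (Aop n) (ek m) = (\<lambda>j. (1 / (\<i> + complex_of_real (ev n m))) * ek m j)"
  unfolding resolv_Aop_p[OF ek_cell2] by (auto simp: ek_def fun_eq_iff)

lemma fc_unique:
  assumes fc: "is_fc (Aop n) \<Phi>" and f: "f \<in> calg" and x: "x \<in> cell2"
  shows "\<Phi> f x = Phi0 n f x"
proof
  fix k
  have fc': "(\<lambda>t. cnj (f t)) \<in> calg" by (rule calg_cnj[OF f])
  have r: "\<Phi> (\<lambda>t. 1 / (\<i> + complex_of_real t)) (ek k) = (\<lambda>j. (1 / (\<i> + complex_of_real (ev n k))) * ek k j)"
    unfolding fc_res[OF fc ek_cell2] by (rule res_ek)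
  have "\<Phi> f x k = cinner (\<Phi> f x) (ek k)" by (simp add: cinner_ek_right)
  also have "\<dots> = cinner x (\<Phi> (\<lambda>t. cnj (f t)) (ek k))" by (rule fc_adj[OF fc f x ek_cell2])
  also have "\<Phi> (\<lambda>t. cnj (f t)) (ek k) = (\<lambda>j. cnj (f (ev n k)) * ek k j)"
    by (rule fc_eigen[OF fc fc' r])
  also have "cinner x (\<lambda>j. cnj (f (ev n k)) * ek k j) = x k * f (ev n k)"
    by (simp add: cinner_scale_ek)
  finally show "\<Phi> f x k = Phi0 n f x k" by (simp add: Phi0_def)
qed

lemma fc_Aop:
  assumes f: "f \<in> calg" and x: "x \<in> cell2"
  shows "fc f (Aop n) x = (\<lambda>j. f (ev n j) * x j)"
proof -
  have "fc f (Aop n) x = Phi0 n f x" unfolding fc_def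
  proof (rule the_equality)
    show "\<exists>\<Phi>. is_fc (Aop n) \<Phi> \<and> \<Phi> f x = Phi0 n f x" using is_fc_Phi0 by blast
  next
    fix y assume "\<exists>\<Phi>. is_fc (Aop n) \<Phi> \<and> \<Phi> f x = y"
    then obtain \<Phi> where "is_fc (Aop n) \<Phi>" "\<Phi> f x = y" by blast
    thus "y = Phi0 n f x" using fc_unique f x by metis
  qed
  thus ?thesis by (simp add: Phi0_def)
qed



definition er :: "nat \<Rightarrow> rseq" where "er k = (\<lambda>j. if j = k then 1 else 0)"

lemma er_dom: "er k \<in> fst (Aop n)"
proof -
  have "summable (\<lambda>j. (er k j)^2)"
    by (rule summable_finite[of "{k}"]) (auto simp: er_def)
  moreover have "summable (\<lambda>j. (real (Suc j) * er k j)^2)"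
    by (rule summable_finite[of "{k}"]) (auto simp: er_def)
  ultimately show ?thesis by (simp add: Aop_def rell2_def)
qed

lemma rinner_er: "rinner x (er k) = x k"
proof -
  have "(\<lambda>j. x j * er k j) = (\<lambda>j. if j = k then x k else 0)" by (auto simp: er_def)
  thus ?thesis unfolding rinner_def by (simp add: suminf_single)
qed

lemma rinner_T_er: "rinner (\<lambda>j. ev n j * er k j) y = ev n k * y k"
proof -
  have "(\<lambda>j. ev n j * er k j * y j) = (\<lambda>j. if j = k then ev n k * y k else 0)" by (auto simp: er_def)
  thus ?thesis unfolding rinner_def by (simp add: suminf_single)
qed

lemma sq_comb:
  fixes u v :: "nat \<Rightarrow> real"
  assumes "summable (\<lambda>j. (u j)^2)" "summable (\<lambda>j. (v j)^2)"
  shows "summable (\<lambda>j. (a * u j + b * v j)^2)"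
proof (rule summable_comparison_test[where g = "\<lambda>j. 2 * a^2 * (u j)^2 + 2 * b^2 * (v j)^2"])
  show "\<exists>N. \<forall>j\<ge>N. norm ((a * u j + b * v j)^2) \<le> 2 * a^2 * (u j)^2 + 2 * b^2 * (v j)^2"
  proof (intro exI allI impI)
    fix j
    have p: "0 \<le> (a * u j - b * v j)^2" by simp
    have e: "(a*u j + b*v j)^2 = 2*a^2*(u j)^2 + 2*b^2*(v j)^2 - (a*u j - b*v j)^2"
      by (simp add: power2_eq_square algebra_simps)
    have "norm ((a * u j + b * v j)^2) = (a * u j + b * v j)^2" by simp
    thus "norm ((a * u j + b * v j)^2) \<le> 2 * a^2 * (u j)^2 + 2 * b^2 * (v j)^2"
      using p e by linarith
  qed
  show "summable (\<lambda>j. 2 * a^2 * (u j)^2 + 2 * b^2 * (v j)^2)"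
    using assms by (intro summable_add summable_mult)
qed

lemma ev_sq: "(ev n j * x)^2 = (real (Suc j) * x)^2"
proof -
  have "(ev n j)^2 = (real (Suc j))^2" using ev_abs[of n j] by (metis power2_abs)
  thus ?thesis by (simp add: power_mult_distrib)
qed

lemma Aop_SA: "Aop n \<in> SA"
proof -
  define D where "D = fst (Aop n)"
  define T where "T = snd (Aop n)"
  have Dd: "D = {x\<in>rell2. summable (\<lambda>j. (real (Suc j) * x j)^2)}" by (simp add: D_def Aop_def)
  have Td: "T = (\<lambda>x j. ev n j * x j)" by (simp add: T_def Aop_def)
  have c1: "D \<subseteq> rell2" unfolding Dd by auto
  have c2: "\<forall>x\<in>D. T x \<in> rell2" unfolding Dd Td rell2_def by (simp add: ev_sq)
  have c3: "\<forall>x\<in>D. \<forall>y\<in>D. \<forall>a b::real. (\<lambda>j. a * x j + b * y j) \<in> D \<and>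
            T (\<lambda>j. a * x j + b * y j) = (\<lambda>j. a * T x j + b * T y j)"
  proof (intro ballI allI conjI)
    fix x y a b assume x: "x \<in> D" and y: "y \<in> D"
    have "summable (\<lambda>j. (a * x j + b * y j)^2)"
      using x y by (intro sq_comb) (auto simp: Dd rell2_def)
    moreover have "summable (\<lambda>j. (a * (real (Suc j) * x j) + b * (real (Suc j) * y j))^2)"
      using x y by (intro sq_comb) (auto simp: Dd)
    ultimately show "(\<lambda>j. a * x j + b * y j) \<in> D" by (simp add: Dd rell2_def algebra_simps)
    show "T (\<lambda>j. a * x j + b * y j) = (\<lambda>j. a * T x j + b * T y j)" by (simp add: Td algebra_simps)
  qed
  have c4: "\<forall>x\<in>rell2. \<forall>\<epsilon>>0. \<exists>y\<in>D. rnorm (\<lambda>j. x j - y j) < \<epsilon>"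
  proof (intro ballI allI impI)
    fix x :: rseq and \<epsilon> :: real assume x: "x \<in> rell2" and \<epsilon>: "\<epsilon> > 0"
    have sx: "summable (\<lambda>j. (x j)^2)" using x by (simp add: rell2_def)
    obtain N where N: "\<And>n. n \<ge> N \<Longrightarrow> norm (\<Sum>i. (x (i + n))^2) < \<epsilon>^2"
      using suminf_exist_split[OF _ sx, of "\<epsilon>^2"] \<epsilon> by auto
    define y where "y = (\<lambda>j. if j < N then x j else 0)"
    have "summable (\<lambda>j. (y j)^2)" by (rule summable_finite[of "{..<N}"]) (auto simp: y_def)
    moreover have "summable (\<lambda>j. (real (Suc j) * y j)^2)" by (rule summable_finite[of "{..<N}"]) (auto simp: y_def)
    ultimately have yD: "y \<in> D" by (simp add: Dd rell2_def)
    define g where "g = (\<lambda>j. (x j - y j)^2)"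
    have sg: "summable g"
      by (rule summable_comparison_test[OF _ sx]) (auto simp: g_def y_def)
    have "suminf g = (\<Sum>i. g (i + N)) + (\<Sum>i<N. g i)" by (rule suminf_split_initial_segment[OF sg])
    also have "(\<Sum>i<N. g i) = 0" by (simp add: g_def y_def)
    also have "(\<lambda>i. g (i + N)) = (\<lambda>i. (x (i + N))^2)" by (simp add: g_def y_def)
    finally have gs: "suminf g = (\<Sum>i. (x (i + N))^2)" by simp
    have "suminf g < \<epsilon>^2" using N[of N] unfolding gs by simp
    hence "sqrt (suminf g) < sqrt (\<epsilon>^2)" by (rule real_sqrt_less_mono)
    hence "rnorm (\<lambda>j. x j - y j) < \<epsilon>" using \<epsilon> by (simp add: rnorm_def g_def)
    with yD show "\<exists>y\<in>D. rnorm (\<lambda>j. x j - y j) < \<epsilon>" by blast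
  qed
  have c5: "\<forall>x\<in>D. \<forall>y\<in>D. rinner (T x) y = rinner x (T y)"
    unfolding Td rinner_def by (simp add: mult_ac)
  have c6: "{y\<in>rell2. \<exists>z\<in>rell2. \<forall>x\<in>D. rinner (T x) y = rinner x z} = D"
  proof
    show "{y\<in>rell2. \<exists>z\<in>rell2. \<forall>x\<in>D. rinner (T x) y = rinner x z} \<subseteq> D"
    proof
      fix y assume "y \<in> {y\<in>rell2. \<exists>z\<in>rell2. \<forall>x\<in>D. rinner (T x) y = rinner x z}"
      then obtain z where y: "y \<in> rell2" and z: "z \<in> rell2" and h: "\<And>x. x \<in> D \<Longrightarrow> rinner (T x) y = rinner x z"
        by blast
      have zk: "z k = ev n k * y k" for k
      proof -
        have "rinner (T (er k)) y = rinner (er k) z" using h[of "er k"] er_dom unfolding D_def by blast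
        hence "ev n k * y k = rinner (er k) z" unfolding Td using rinner_T_er by simp
        also have "rinner (er k) z = z k"
        proof -
          have "(\<lambda>j. er k j * z j) = (\<lambda>j. if j = k then z k else 0)" by (auto simp: er_def)
          thus ?thesis unfolding rinner_def by (simp add: suminf_single)
        qed
        finally show ?thesis by simp
      qed
      have "summable (\<lambda>j. (z j)^2)" using z by (simp add: rell2_def)
      hence "summable (\<lambda>j. (real (Suc j) * y j)^2)" by (simp add: zk ev_sq)
      thus "y \<in> D" using y by (simp add: Dd)
    qed
  next
    show "D \<subseteq> {y\<in>rell2. \<exists>z\<in>rell2. \<forall>x\<in>D. rinner (T x) y = rinner x z}"
    proof
      fix y assume y: "y \<in> D"
      have "T y \<in> rell2" using c2 y by blast
      moreover have "\<forall>x\<in>D. rinner (T x) y = rinner x (T y)" using c5 y by blast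
      ultimately show "y \<in> {y\<in>rell2. \<exists>z\<in>rell2. \<forall>x\<in>D. rinner (T x) y = rinner x z}"
        using y c1 by blast
    qed
  qed
  show ?thesis unfolding SA_def selfadjoint_def Let_def mem_Collect_eq
    using c1 c2 c3 c4 c5 c6 unfolding D_def T_def by blast
qed



lemma copnorm_single: "copnorm (\<lambda>x j. (if j = m then d0 else 0) * x j) = cmod d0"
  by (rule copnorm_diag[where m = m]) auto

lemma diff_single:
  fixes g :: "real \<Rightarrow> complex"
  assumes "n \<ge> 1"
  shows "(\<lambda>j. g (ev n j) * x j - g (ev 0 j) * x j) =
         (\<lambda>j. (if j = n - 1 then g (- real n) - g (real n) else 0) * x j)"
proof (rule ext)
  fix j
  show "g (ev n j) * x j - g (ev 0 j) * x j = (if j = n - 1 then g (- real n) - g (real n) else 0) * x j"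
  proof (cases "j = n - 1")
    case True
    hence "Suc j = n" using assms by simp
    thus ?thesis using True by (simp add: ev_def left_diff_distrib)
  next
    case False
    hence "Suc j \<noteq> n" using assms by auto
    thus ?thesis using False by (simp add: ev_def)
  qed
qed

lemma copnorm_fc_diff:
  assumes f: "f \<in> calg" and n: "n \<ge> 1"
  shows "copnorm (\<lambda>x j. fc f (Aop n) x j - fc f (Aop 0) x j) = cmod (f (- real n) - f (real n))"
proof -
  have "copnorm (\<lambda>x j. fc f (Aop n) x j - fc f (Aop 0) x j) =
        copnorm (\<lambda>x j. (if j = n - 1 then f (- real n) - f (real n) else 0) * x j)"
  proof (rule copnorm_cong)
    fix x assume x: "x \<in> cell2"
    show "(\<lambda>j. fc f (Aop n) x j - fc f (Aop 0) x j) = (\<lambda>j. (if j = n - 1 then f (- real n) - f (real n) else 0) * x j)"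
      unfolding fc_Aop[OF f x] by (rule diff_single[OF n])
  qed
  thus ?thesis by (simp add: copnorm_single)
qed

lemma copnorm_res_diff:
  assumes n: "n \<ge> 1" and s: "s = 1 \<or> s = -1"
  shows "copnorm (\<lambda>x j. resolv \<i> (complex_of_real s) (Aop n) x j - resolv \<i> (complex_of_real s) (Aop 0) x j)
       = cmod (1 / (\<i> + complex_of_real (s * - real n)) - 1 / (\<i> + complex_of_real (s * real n)))"
proof -
  let ?g = "\<lambda>t. 1 / (\<i> + complex_of_real (s * t))"
  have "copnorm (\<lambda>x j. resolv \<i> (complex_of_real s) (Aop n) x j - resolv \<i> (complex_of_real s) (Aop 0) x j) =
        copnorm (\<lambda>x j. (if j = n - 1 then ?g (- real n) - ?g (real n) else 0) * x j)"
  proof (rule copnorm_cong)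
    fix x assume x: "x \<in> cell2"
    have "(\<lambda>j. resolv \<i> (complex_of_real s) (Aop n) x j - resolv \<i> (complex_of_real s) (Aop 0) x j)
        = (\<lambda>j. ?g (ev n j) * x j - ?g (ev 0 j) * x j)"
      unfolding resolv_Aop[OF s x] by simp
    also have "\<dots> = (\<lambda>j. (if j = n - 1 then ?g (- real n) - ?g (real n) else 0) * x j)"
      by (rule diff_single[OF n])
    finally show "(\<lambda>j. resolv \<i> (complex_of_real s) (Aop n) x j - resolv \<i> (complex_of_real s) (Aop 0) x j)
        = (\<lambda>j. (if j = n - 1 then ?g (- real n) - ?g (real n) else 0) * x j)" .
  qed
  thus ?thesis by (simp add: copnorm_single)
qed

lemma inv_bound: "a \<noteq> 0 \<Longrightarrow> cmod (1 / (\<i> + complex_of_real a)) \<le> 1 / \<bar>a\<bar>"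
proof -
  assume a: "a \<noteq> 0"
  have "\<bar>a\<bar> \<le> cmod (\<i> + complex_of_real a)" by (rule norm_i_plus_ge(2))
  thus ?thesis using a by (simp add: norm_divide frac_le)
qed

lemma res_pair_bound:
  assumes n: "n \<ge> 1" and s: "s = 1 \<or> s = -1"
  shows "cmod (1 / (\<i> + complex_of_real (s * - real n)) - 1 / (\<i> + complex_of_real (s * real n))) \<le> 2 / real n"
proof -
  have a1: "\<bar>s * - real n\<bar> = real n" "\<bar>s * real n\<bar> = real n" using s by auto
  have nz: "s * - real n \<noteq> 0" "s * real n \<noteq> 0" using s n by auto
  have "cmod (1 / (\<i> + complex_of_real (s * - real n)) - 1 / (\<i> + complex_of_real (s * real n)))
      \<le> cmod (1 / (\<i> + complex_of_real (s * - real n))) + cmod (1 / (\<i> + complex_of_real (s * real n)))"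
    by (rule norm_triangle_ineq4)
  also have "\<dots> \<le> 1 / real n + 1 / real n"
    using inv_bound[OF nz(1)] inv_bound[OF nz(2)] a1 by (intro add_mono) auto
  finally show ?thesis by simp
qed

lemma gap_eq:
  assumes n: "n \<ge> 1"
  shows "gap_dist (Aop n) (Aop 0) =
     cmod (1 / (\<i> + complex_of_real (1 * - real n)) - 1 / (\<i> + complex_of_real (1 * real n)))
   + cmod (1 / (\<i> + complex_of_real (-1 * - real n)) - 1 / (\<i> + complex_of_real (-1 * real n)))"
  using copnorm_res_diff[OF n, of 1] copnorm_res_diff[OF n, of "-1"]
  unfolding gap_dist_def by simp

lemma gap_bound: "n \<ge> 1 \<Longrightarrow> gap_dist (Aop n) (Aop 0) \<le> 4 / real n \<and> gap_dist (Aop n) (Aop 0) \<ge> 0"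
proof -
  assume n: "n \<ge> 1"
  have "gap_dist (Aop n) (Aop 0) \<le> 2 / real n + 2 / real n"
    unfolding gap_eq[OF n] using res_pair_bound[OF n, of 1] res_pair_bound[OF n, of "-1"]
    by (intro add_mono) auto
  moreover have "gap_dist (Aop n) (Aop 0) \<ge> 0" unfolding gap_eq[OF n] by simp
  ultimately show ?thesis by simp
qed

lemma gap_lim: "(\<lambda>n. gap_dist (Aop n) (Aop 0)) \<longlonglongrightarrow> 0"
proof (rule tendsto_sandwich[of "\<lambda>n. 0" _ _ "\<lambda>n. 4 / real n"])
  have ev1: "eventually (\<lambda>n::nat. n \<ge> 1) sequentially" by (rule eventually_ge_at_top)
  show "eventually (\<lambda>n. 0 \<le> gap_dist (Aop n) (Aop 0)) sequentially"
    using ev1 by (rule eventually_mono) (use gap_bound in blast)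
  show "eventually (\<lambda>n. gap_dist (Aop n) (Aop 0) \<le> 4 / real n) sequentially"
    using ev1 by (rule eventually_mono) (use gap_bound in blast)
  show "(\<lambda>n. 0::real) \<longlonglongrightarrow> 0" by simp
  show "(\<lambda>n. 4 / real n) \<longlonglongrightarrow> 0" by (rule lim_const_over_n)
qed

lemma riesz_ge: assumes n: "n \<ge> 1" shows "riesz_dist (Aop n) (Aop 0) \<ge> 1"
proof -
  have r: "riesz_dist (Aop n) (Aop 0) = cmod (Psi (- real n) - Psi (real n))"
    unfolding riesz_dist_def by (rule copnorm_fc_diff[OF calg_Psi n])
  define s where "s = sqrt (1 + (real n)^2)"
  have sp: "s > 0" unfolding s_def by (simp add: add_pos_nonneg)
  have "Psi (- real n) - Psi (real n) = complex_of_real (- real n / s - real n / s)"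
    unfolding Psi_def s_def of_real_diff by simp
  also have "- real n / s - real n / s = - (2 * real n / s)" by (simp add: field_simps)
  finally have d: "Psi (- real n) - Psi (real n) = complex_of_real (- (2 * real n / s))" .
  have e: "cmod (Psi (- real n) - Psi (real n)) = 2 * real n / s"
    unfolding d norm_of_real using sp by simp
  have s2: "s^2 = 1 + (real n)^2" unfolding s_def by (rule real_sqrt_pow2) (rule add_nonneg_nonneg, simp_all)
  have n1: "real n \<ge> 1" using n by simp
  have "1 * 1 \<le> real n * real n" by (rule mult_mono[OF n1 n1]) simp_all
  hence "s^2 \<le> (2 * real n)^2" using s2 by (simp add: power2_eq_square)
  hence "s \<le> 2 * real n" by (rule power2_le_imp_le) simp
  hence "1 \<le> 2 * real n / s" using sp by (simp add: le_divide_eq)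
  thus ?thesis using r e by simp
qed



lemma ev_pick:
  assumes "eventually P sequentially"
  obtains n where "n \<ge> (1::nat)" "P n"
proof -
  from assms obtain N where N: "\<And>n. n \<ge> N \<Longrightarrow> P n" unfolding eventually_sequentially by blast
  show ?thesis using that[of "max N 1"] N[of "max N 1"] by simp
qed

theorem mainTheorem4:
  shows "(\<forall>n. Aop n \<in> SA)
    \<and> (\<lambda>n. gap_dist (Aop n) (Aop 0)) \<longlonglongrightarrow> 0
    \<and> \<not> ((\<lambda>n. riesz_dist (Aop n) (Aop 0)) \<longlonglongrightarrow> 0)
    \<and> (\<forall>\<alpha>\<in>calg. (\<exists>L. \<forall>t\<ge>L. \<alpha> t = 1) \<and> (\<exists>L. \<forall>t\<le>L. \<alpha> t = 0) \<longrightarrow>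
          (\<exists>N. \<forall>n\<ge>N. copnorm (\<lambda>x j. fc \<alpha> (Aop n) x j - fc \<alpha> (Aop 0) x j) = 1))
    \<and> \<not> (\<forall>B\<in>SA. \<forall>\<epsilon>>0. \<exists>\<delta>>0. \<forall>C\<in>SA. gap_dist C B < \<delta> \<longrightarrow> riesz_dist C B < \<epsilon>)"
proof (intro conjI)
  show 1: "\<forall>n. Aop n \<in> SA" using Aop_SA by blast
  show 2: "(\<lambda>n. gap_dist (Aop n) (Aop 0)) \<longlonglongrightarrow> 0" by (rule gap_lim)
  show "\<not> ((\<lambda>n. riesz_dist (Aop n) (Aop 0)) \<longlonglongrightarrow> 0)"
  proof
    assume "(\<lambda>n. riesz_dist (Aop n) (Aop 0)) \<longlonglongrightarrow> 0"
    hence "eventually (\<lambda>n. dist (riesz_dist (Aop n) (Aop 0)) 0 < 1) sequentially"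
      by (rule tendstoD) simp
    then obtain n where n: "n \<ge> 1" "dist (riesz_dist (Aop n) (Aop 0)) 0 < 1" by (rule ev_pick)
    thus False using riesz_ge[OF n(1)] by (simp add: dist_real_def)
  qed
  show "\<forall>\<alpha>\<in>calg. (\<exists>L. \<forall>t\<ge>L. \<alpha> t = 1) \<and> (\<exists>L. \<forall>t\<le>L. \<alpha> t = 0) \<longrightarrow>
          (\<exists>N. \<forall>n\<ge>N. copnorm (\<lambda>x j. fc \<alpha> (Aop n) x j - fc \<alpha> (Aop 0) x j) = 1)"
  proof (intro ballI impI)
    fix \<alpha> assume a: "\<alpha> \<in> calg" and h: "(\<exists>L. \<forall>t\<ge>L. \<alpha> t = 1) \<and> (\<exists>L. \<forall>t\<le>L. \<alpha> t = 0)"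
    then obtain L1 L2 where L1: "\<And>t. t \<ge> L1 \<Longrightarrow> \<alpha> t = 1" and L2: "\<And>t. t \<le> L2 \<Longrightarrow> \<alpha> t = 0" by blast
    define N where "N = nat \<lceil>max (max L1 (- L2)) 1\<rceil>"
    have "copnorm (\<lambda>x j. fc \<alpha> (Aop n) x j - fc \<alpha> (Aop 0) x j) = 1" if n: "n \<ge> N" for n
    proof -
      have "real N \<ge> max (max L1 (- L2)) 1" unfolding N_def by linarith
      moreover have "real n \<ge> real N" using n by simp
      ultimately have r: "real n \<ge> L1" "- real n \<le> L2" "real n \<ge> 1" by auto
      have n1: "n \<ge> 1" using r(3) by simp
      show ?thesis unfolding copnorm_fc_diff[OF a n1] using L1[OF r(1)] L2[OF r(2)] by simp
    qed
    thus "\<exists>N. \<forall>n\<ge>N. copnorm (\<lambda>x j. fc \<alpha> (Aop n) x j - fc \<alpha> (Aop 0) x j) = 1" by blast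
  qed
  show "\<not> (\<forall>B\<in>SA. \<forall>\<epsilon>>0. \<exists>\<delta>>0. \<forall>C\<in>SA. gap_dist C B < \<delta> \<longrightarrow> riesz_dist C B < \<epsilon>)"
  proof
    assume H: "\<forall>B\<in>SA. \<forall>\<epsilon>>0. \<exists>\<delta>>0. \<forall>C\<in>SA. gap_dist C B < \<delta> \<longrightarrow> riesz_dist C B < \<epsilon>"
    have "Aop 0 \<in> SA" by (rule Aop_SA)
    with H obtain \<delta> where d: "\<delta> > 0" and hd: "\<And>C. C \<in> SA \<Longrightarrow> gap_dist C (Aop 0) < \<delta> \<Longrightarrow> riesz_dist C (Aop 0) < 1"
      by (meson zero_less_one)
    have "eventually (\<lambda>n. dist (gap_dist (Aop n) (Aop 0)) 0 < \<delta>) sequentially"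
      using 2 d by (rule tendstoD)
    then obtain n where n: "n \<ge> 1" "dist (gap_dist (Aop n) (Aop 0)) 0 < \<delta>" by (rule ev_pick)
    have "gap_dist (Aop n) (Aop 0) < \<delta>" using n(2) gap_bound[OF n(1)] by (simp add: dist_real_def)
    hence "riesz_dist (Aop n) (Aop 0) < 1" by (rule hd[OF Aop_SA])
    thus False using riesz_ge[OF n(1)] by simp
  qed
qed

end
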